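(* Let $F$ be a finite field of characteristic $2$ with $[F:\mathbb{F}_2]$ odd, and let $d$ be an invertible exponent over $F$. Then there exists $a\in F^*$ such that $|W_{F,d}(a)|\ge\sqrt{2|F|}$. *)

theory Defs
  imports Complex_Main
begin

text \<open>Absolute trace from a field with 2^n elements down to F_2 (values 0 or 1 in F).\<close>
definition abs_trace2 :: "nat \<Rightarrow> 'a::field \<Rightarrow> 'a" where
  "abs_trace2 n x = (\<Sum>i<n. x ^ (2 ^ i))"

definition walsh :: "nat \<Rightarrow> nat \<Rightarrow> 'a::{finite,field} \<Rightarrow> real" where
  "walsh n d a = (\<Sum>x\<in>(UNIV::'a set).
      (if abs_trace2 n (x ^ d + a * x) = 0 then 1 else -1))"

definition invertible_exponent :: "'a::{finite,field} itself \<Rightarrow> nat \<Rightarrow> bool" where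
  "invertible_exponent (T :: 'a itself) d \<longleftrightarrow> 0 < d \<and> coprime d (card (UNIV :: 'a set) - 1)"

end

theory Submission imports Defs begin

lemma fermat_field:
  fixes x :: "'a::{finite,field}"
  assumes "x \<noteq> 0"
  shows "x ^ (card (UNIV::'a set) - 1) = 1"
proof -
  let ?A = "UNIV - {0::'a}"
  have inj: "inj_on (\<lambda>y. x * y) ?A" using assms by (auto simp: inj_on_def)
  have img: "(\<lambda>y. x * y) ` ?A = ?A"
  proof
    show "(\<lambda>y. x * y) ` ?A \<subseteq> ?A" using assms by auto
    show "?A \<subseteq> (\<lambda>y. x * y) ` ?A"
    proof
      fix z assume "z \<in> ?A"
      then have "z = x * (z / x)" "z / x \<in> ?A" using assms by auto
      then show "z \<in> (\<lambda>y. x * y) ` ?A" by blast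
    qed
  qed
  have "prod (\<lambda>y. y) ?A = prod (\<lambda>y. y) ((\<lambda>y. x * y) ` ?A)" using img by simp
  also have "\<dots> = prod (\<lambda>y. x * y) ?A" using prod.reindex[OF inj] by simp
  also have "\<dots> = x ^ card ?A * prod (\<lambda>y. y) ?A" by (simp add: prod.distrib)
  finally have e: "prod (\<lambda>y. y) ?A = x ^ card ?A * prod (\<lambda>y. y) ?A" .
  have "prod (\<lambda>y. y) ?A \<noteq> 0" by simp
  with e have "x ^ card ?A = 1" by simp
  moreover have "card ?A = card (UNIV::'a set) - 1" by (simp add: card_Diff_singleton)
  ultimately show ?thesis by simp
qed

lemma fermat_field2:
  fixes x :: "'a::{finite,field}"
  shows "x ^ card (UNIV::'a set) = x"
proof (cases "x = 0")
  case True
  have "card (UNIV::'a set) > 0" by (simp add: finite_UNIV_card_ge_0)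
  then show ?thesis using True by (simp add: power_0_left)
next
  case False
  have "card (UNIV::'a set) > 0" by (simp add: finite_UNIV_card_ge_0)
  then have "card (UNIV::'a set) = Suc (card (UNIV::'a set) - 1)" by simp
  then have "x ^ card (UNIV::'a set) = x * x ^ (card (UNIV::'a set) - 1)" by (metis power_Suc)
  then show ?thesis using fermat_field[OF False] by simp
qed

lemma two0: "CHAR('a::field) = 2 \<Longrightarrow> (2::'a) = 0"
  by (metis of_nat_CHAR of_nat_numeral)

lemma frob2: "(2::'a::comm_ring_1) = 0 \<Longrightarrow> (x + y :: 'a) ^ 2 = x ^ 2 + y ^ 2"
proof -
  assume h: "(2::'a) = 0"
  have "(x+y)^2 = x^2 + y^2 + 2 * x * y" by (simp add: power2_eq_square algebra_simps)
  then show ?thesis using h by simp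
qed

lemma frob2i: "(2::'a::comm_ring_1) = 0 \<Longrightarrow> (x + y :: 'a) ^ (2^i) = x ^ (2^i) + y ^ (2^i)"
proof (induction i)
  case 0 then show ?case by simp
next
  case (Suc i)
  have "(x + y) ^ (2^Suc i) = ((x+y)^(2^i))^2" by (simp add: power_mult[symmetric] mult.commute)
  also have "\<dots> = (x ^ (2^i))^2 + (y ^ (2^i))^2" using Suc frob2 by metis
  also have "\<dots> = x ^ (2^Suc i) + y ^ (2^Suc i)" by (simp add: power_mult[symmetric] mult.commute)
  finally show ?case .
qed

lemma frob_sum: assumes h: "(2::'a::comm_ring_1) = 0" and fin: "finite A"
  shows "(sum f A :: 'a) ^ 2 = sum (\<lambda>i. f i ^ 2) A"
  using fin proof (induction A rule: finite_induct)
  case empty then show ?case by simp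
next
  case (insert a A) then show ?case using frob2[OF h] by simp
qed

lemma neg_self: "(2::'a::comm_ring_1) = 0 \<Longrightarrow> - (x::'a) = x"
proof -
  assume "(2::'a) = 0"
  then have "x + x = 0" by (metis mult_2 mult_zero_left)
  then show ?thesis by (simp add: add_eq_0_iff2)
qed

definition psi :: "nat \<Rightarrow> 'a::{finite,field} \<Rightarrow> real" where
  "psi n t = (if abs_trace2 n t = 0 then 1 else -1)"

context
  fixes n :: nat
  assumes ch: "CHAR('a::{finite,field}) = 2" and cd: "card (UNIV::'a set) = 2^n"
begin

lemma two_a: "(2::'a) = 0" using two0[OF ch] .

lemma tr_add: "abs_trace2 n (x+y) = abs_trace2 n x + abs_trace2 n (y::'a)"
  unfolding abs_trace2_def using frob2i[OF two_a] by (simp add: sum.distrib)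

lemma tr_sq: "(abs_trace2 n (x::'a))^2 = abs_trace2 n x"
proof -
  have "(abs_trace2 n x)^2 = (\<Sum>i<n. (x^(2^i))^2)"
    unfolding abs_trace2_def by (rule frob_sum[OF two_a], simp)
  also have "\<dots> = (\<Sum>i<n. x^(2^Suc i))" by (simp add: power_mult[symmetric] mult.commute)
  also have "\<dots> = (\<Sum>i<Suc n. x^(2^i)) - x" by (subst sum.lessThan_Suc_shift) simp
  also have "\<dots> = abs_trace2 n x + x^(2^n) - x" by (simp add: abs_trace2_def)
  also have "x^(2^n) = x" using fermat_field2[of x] cd by simp
  finally show ?thesis by simp
qed

lemma tr01: "abs_trace2 n (x::'a) = 0 \<or> abs_trace2 n x = 1"
proof -
  have "abs_trace2 n x * (abs_trace2 n x - 1) = 0" using tr_sq[of x]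
    by (simp add: power2_eq_square algebra_simps)
  then show ?thesis by simp
qed

lemma psi_add: "psi n (s + t) = psi n s * psi n (t::'a)"
proof -
  have one: "(1::'a) + 1 = 0" using two_a by simp
  show ?thesis using tr01[of s] tr01[of t] one unfolding psi_def tr_add by auto
qed

lemma psi_sq: "psi n (t::'a) * psi n t = 1" unfolding psi_def by simp

lemma psi_0: "psi n (0::'a) = 1" unfolding psi_def abs_trace2_def by (simp add: power_0_left)

lemma walsh_psi: "walsh n d a = (\<Sum>x\<in>UNIV. psi n (x^d) * psi n (a*(x::'a)))"
  unfolding walsh_def psi_add[symmetric] by (simp add: psi_def)

end


lemma sum_mult_reindex:
  fixes c :: "'a::{finite,field}"
  assumes "c \<noteq> 0"
  shows "(\<Sum>x\<in>UNIV. f (c * x)) = (\<Sum>x\<in>UNIV. f x)"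
  by (rule sum.reindex_bij_witness[of _ "\<lambda>x. x / c" "\<lambda>x. c * x"]) (use assms in auto)

lemma sum_add_reindex:
  fixes b :: "'a::{finite,field}"
  shows "(\<Sum>x\<in>UNIV. f (x + b)) = (\<Sum>x\<in>UNIV. f x)"
  by (rule sum.reindex_bij_witness[of _ "\<lambda>x. x - b" "\<lambda>x. x + b"]) auto

context
  fixes n :: nat and b :: "'a::{finite,field}"
  assumes ch: "CHAR('a) = 2" and cd: "card (UNIV::'a set) = 2^n"
    and bb: "psi n b = -1"
begin

lemma sum_psi: "(\<Sum>a\<in>UNIV. psi n (a::'a)) = 0"
proof -
  have "(\<Sum>a\<in>UNIV. psi n (a+b)) = (\<Sum>a\<in>UNIV. psi n (a::'a))" using sum_add_reindex[of "psi n" b] by simp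
  moreover have "(\<Sum>a\<in>UNIV. psi n (a+b)) = - (\<Sum>a\<in>UNIV. psi n (a::'a))"
    using psi_add[OF ch cd] bb by (simp add: sum_negf)
  ultimately show ?thesis by linarith
qed

lemma Ksum: "(\<Sum>a\<in>UNIV. psi n (a * (c::'a))) = (if c = 0 then real (card (UNIV::'a set)) else 0)"
proof (cases "c = 0")
  case True then show ?thesis using psi_0[OF ch cd] by simp
next
  case False
  have "(\<Sum>a\<in>UNIV. psi n (a * c)) = (\<Sum>a\<in>UNIV. psi n (c * a))" by (simp add: mult.commute)
  also have "\<dots> = 0" using sum_mult_reindex[OF False, of "psi n"] sum_psi by simp
  finally show ?thesis using False by simp
qed

end

context
  fixes d :: nat
  assumes inv: "invertible_exponent TYPE('a::{finite,field}) d"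
begin

lemma pow_inv: "\<exists>u. \<forall>x::'a. (x^d)^u = x"
proof -
  have d0: "d > 0" and cop: "coprime d (card (UNIV::'a set) - 1)" using inv unfolding invertible_exponent_def by auto
  obtain u v where uv: "d * u = (card (UNIV::'a set) - 1) * v + gcd d (card (UNIV::'a set) - 1)"
    using bezout_nat[of d "card (UNIV::'a set) - 1"] d0 by auto
  then have uv1: "d * u = (card (UNIV::'a set) - 1) * v + 1" using cop by simp
  have "(x^d)^u = x" for x :: 'a
  proof (cases "x = 0")
    case True then show ?thesis using uv1 d0 by (simp add: power_mult[symmetric] power_0_left) (metis mult_0_right nat.simps(3) neq0_conv)
  next
    case False
    have "(x^d)^u = x^((card (UNIV::'a set) - 1) * v) * x" by (simp add: power_mult[symmetric] uv1)
    also have "\<dots> = x" using fermat_field[OF False] by (simp add: power_mult)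
    finally show ?thesis .
  qed
  then show ?thesis by blast
qed

lemma pow_bij: "bij (\<lambda>x::'a. x^d)"
proof -
  obtain u where u: "\<forall>x::'a. (x^d)^u = x" using pow_inv by blast
  have "inj (\<lambda>x::'a. x^d)" by (metis (no_types, lifting) injI u)
  moreover then have "surj (\<lambda>x::'a. x^d)" using finite_UNIV_inj_surj[of "\<lambda>x::'a. x^d"] by simp
  ultimately show ?thesis by (simp add: bij_def)
qed

lemma sum_pow_reindex: "(\<Sum>x\<in>UNIV. f (x^d)) = (\<Sum>x\<in>(UNIV::'a set). f x)"
  using sum.reindex_bij_betw[of "\<lambda>x::'a. x^d" UNIV UNIV f] pow_bij by simp

end


lemma sum3_mult_reindex:
  fixes c :: "'a::{finite,field}"
  assumes "c \<noteq> 0"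
  shows "(\<Sum>x\<in>UNIV. \<Sum>y\<in>UNIV. \<Sum>z\<in>UNIV. f (c*x) (c*y) (c*z)) = (\<Sum>x\<in>UNIV. \<Sum>y\<in>UNIV. \<Sum>z\<in>UNIV. f x y z)"
proof -
  have h1: "(\<Sum>z\<in>UNIV. f (c*x) (c*y) (c*z)) = (\<Sum>z\<in>UNIV. f (c*x) (c*y) z)" for x y
    by (rule sum_mult_reindex[OF assms, of "f (c*x) (c*y)"])
  have h2: "(\<Sum>y\<in>UNIV. \<Sum>z\<in>UNIV. f (c*x) (c*y) z) = (\<Sum>y\<in>UNIV. \<Sum>z\<in>UNIV. f (c*x) y z)" for x
    by (rule sum_mult_reindex[OF assms, of "\<lambda>y. \<Sum>z\<in>UNIV. f (c*x) y z"])
  have "(\<Sum>x\<in>UNIV. \<Sum>y\<in>UNIV. \<Sum>z\<in>UNIV. f (c*x) (c*y) (c*z)) = (\<Sum>x\<in>UNIV. \<Sum>y\<in>UNIV. \<Sum>z\<in>UNIV. f (c*x) y z)"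
    by (simp add: h1 h2)
  also have "\<dots> = (\<Sum>x\<in>UNIV. \<Sum>y\<in>UNIV. \<Sum>z\<in>UNIV. f x y z)"
    by (rule sum_mult_reindex[OF assms, of "\<lambda>x. \<Sum>y\<in>UNIV. \<Sum>z\<in>UNIV. f x y z"])
  finally show ?thesis .
qed

lemma swap3:
  "(\<Sum>a\<in>A. \<Sum>x\<in>B. \<Sum>y\<in>C. F a x y) = (\<Sum>x\<in>B. \<Sum>y\<in>C. \<Sum>a\<in>A. F a x y)"
  by (subst sum.swap, rule sum.cong[OF refl], subst sum.swap, rule refl)

lemma swap4:
  "(\<Sum>a\<in>A. \<Sum>x\<in>B. \<Sum>y\<in>C. \<Sum>z\<in>D. F a x y z) = (\<Sum>x\<in>B. \<Sum>y\<in>C. \<Sum>z\<in>D. \<Sum>a\<in>A. F a x y z)"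
  by (subst sum.swap, rule sum.cong[OF refl], subst swap3, rule refl)

lemma swap5:
  "(\<Sum>a\<in>A. \<Sum>x\<in>B. \<Sum>y\<in>C. \<Sum>z\<in>D. \<Sum>w\<in>E. F a x y z w) = (\<Sum>x\<in>B. \<Sum>y\<in>C. \<Sum>z\<in>D. \<Sum>w\<in>E. \<Sum>a\<in>A. F a x y z w)"
  by (subst sum.swap, rule sum.cong[OF refl], subst swap4, rule refl)


lemma count3:
  fixes q :: real
  assumes qd: "q = real (card (UNIV::'a::finite set))"
  shows "(\<Sum>x\<in>(UNIV::'a set). \<Sum>y\<in>UNIV. \<Sum>z\<in>UNIV. (if x=y \<or> y=z \<or> x=z then q else 0) - 1) = 2*q^2*(q-1)"
proof -
  have inner: "(\<Sum>z\<in>UNIV. (if x=y \<or> y=z \<or> x=z then q else 0) - 1) = (if y = x then q*q - q else q)" for x y :: 'a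
  proof (cases "x = y")
    case True then show ?thesis using qd by (simp add: algebra_simps)
  next
    case False
    have "(\<Sum>z\<in>UNIV. (if x=y \<or> y=z \<or> x=z then q else 0) - 1) = 
          (\<Sum>z\<in>UNIV. (if z = y then q else 0) + (if z = x then q else 0) - 1)"
      using False by (intro sum.cong refl) auto
    also have "\<dots> = q + q - q" using qd by (simp add: sum.distrib sum_subtractf)
    finally show ?thesis using False by simp
  qed
  have mid: "(\<Sum>y\<in>UNIV. (if y = x then q*q - q else q)) = 2*q*q - 2*q" for x :: 'a
  proof -
    have "(\<Sum>y\<in>UNIV. (if y = x then q*q - q else q)) = (\<Sum>y\<in>UNIV. q + (if y = x then q*q - 2*q else 0))"
      by (intro sum.cong refl) auto
    also have "\<dots> = q*q + (q*q - 2*q)" using qd by (simp add: sum.distrib)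
    finally show ?thesis by simp
  qed
  have "(\<Sum>x\<in>(UNIV::'a set). \<Sum>y\<in>UNIV. \<Sum>z\<in>UNIV. (if x=y \<or> y=z \<or> x=z then q else 0) - 1)
      = (\<Sum>x\<in>(UNIV::'a set). 2*q*q - 2*q)" by (simp add: inner mid)
  also have "\<dots> = 2*q^2*(q-1)" using qd by (simp add: power2_eq_square algebra_simps)
  finally show ?thesis .
qed

context
  fixes n d :: nat and b :: "'a::{finite,field}"
  assumes ch: "CHAR('a) = 2" and cd: "card (UNIV::'a set) = 2^n"
    and bb: "psi n b = -1"
    and inv: "invertible_exponent TYPE('a) d"
begin

lemma W0: "walsh n d (0::'a) = 0"
proof -
  have "walsh n d (0::'a) = (\<Sum>x\<in>UNIV. psi n ((x::'a)^d))"
    by (simp add: walsh_psi[OF ch cd] psi_0[OF ch cd])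
  also have "\<dots> = (\<Sum>x\<in>UNIV. psi n (x::'a))" by (rule sum_pow_reindex[OF inv])
  also have "\<dots> = 0" by (rule sum_psi[OF ch cd bb])
  finally show ?thesis .
qed

lemma uu: "(u::'a) + u = 0" using two0[OF ch] by (metis mult_2 mult_zero_left)

lemma Wsq: "(walsh n d (a::'a))^2 = (\<Sum>x\<in>UNIV. \<Sum>y\<in>UNIV. psi n (x^d) * psi n (y^d) * psi n (a*(x+y)))"
  by (simp add: power2_eq_square walsh_psi[OF ch cd] sum_product psi_add[OF ch cd] distrib_left mult_ac)

lemma M2: "(\<Sum>a\<in>UNIV. (walsh n d (a::'a))^2) = (real (card (UNIV::'a set)))^2"
proof -
  let ?q = "real (card (UNIV::'a set))"
  have "(\<Sum>a\<in>UNIV. (walsh n d (a::'a))^2) = (\<Sum>a\<in>UNIV. \<Sum>x\<in>UNIV. \<Sum>y\<in>UNIV. psi n (x^d) * psi n (y^d) * psi n (a*(x+(y::'a))))"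
    by (simp add: Wsq)
  also have "\<dots> = (\<Sum>x\<in>UNIV. \<Sum>y\<in>UNIV. \<Sum>a\<in>UNIV. psi n (x^d) * psi n (y^d) * psi n (a*(x+(y::'a))))"
    by (rule swap3)
  also have "\<dots> = (\<Sum>x\<in>UNIV. \<Sum>y\<in>UNIV. psi n (x^d) * psi n (y^d) * (if y = (x::'a) then ?q else 0))"
  proof (intro sum.cong refl)
    fix x y :: 'a
    have e: "(x + y = 0) = (y = x)" by (metis add_right_cancel uu)
    show "(\<Sum>a\<in>UNIV. psi n (x^d) * psi n (y^d) * psi n (a*(x+y))) = psi n (x^d) * psi n (y^d) * (if y = x then ?q else 0)"
      by (simp add: sum_distrib_left[symmetric] Ksum[OF ch cd bb] e)
  qed
  also have "\<dots> = (\<Sum>x\<in>(UNIV::'a set). ?q)"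
    by (simp add: psi_sq[OF ch cd] if_distrib cong: if_cong)
  also have "\<dots> = ?q^2" by (simp add: power2_eq_square)
  finally show ?thesis .
qed


lemma W4: "(walsh n d (a::'a))^4 = (\<Sum>x\<in>UNIV. \<Sum>y\<in>UNIV. \<Sum>z\<in>UNIV. \<Sum>w\<in>UNIV.
     psi n (x^d) * psi n (y^d) * psi n (z^d) * psi n (w^d) * psi n (a*(x+y+z+(w::'a))))"
proof -
  have "(walsh n d a)^4 = (walsh n d a)^2 * (walsh n d a)^2" by algebra
  also have "\<dots> = (\<Sum>x\<in>UNIV. \<Sum>y\<in>UNIV. \<Sum>z\<in>UNIV. \<Sum>w\<in>UNIV.
     (psi n (z^d) * psi n (w^d) * psi n (a*(z+(w::'a)))) * (psi n (x^d) * psi n (y^d) * psi n (a*(x+y))))"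
    unfolding Wsq by (simp add: sum_distrib_left sum_distrib_right)
  also have "\<dots> = (\<Sum>x\<in>UNIV. \<Sum>y\<in>UNIV. \<Sum>z\<in>UNIV. \<Sum>w\<in>UNIV.
     psi n (x^d) * psi n (y^d) * psi n (z^d) * psi n (w^d) * psi n (a*(x+y+z+(w::'a))))"
  proof (intro sum.cong refl)
    fix x y z w :: 'a
    have "psi n (a*(x+y+z+w)) = psi n (a*(x+y)) * psi n (a*(z+w))"
      by (metis psi_add[OF ch cd] distrib_left add.assoc)
    then show "(psi n (z^d) * psi n (w^d) * psi n (a*(z+(w::'a)))) * (psi n (x^d) * psi n (y^d) * psi n (a*(x+y)))
      = psi n (x^d) * psi n (y^d) * psi n (z^d) * psi n (w^d) * psi n (a*(x+y+z+(w::'a)))"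
      by (simp add: mult_ac)
  qed
  finally show ?thesis .
qed

lemma M4: "(\<Sum>a\<in>UNIV. (walsh n d (a::'a))^4) = real (card (UNIV::'a set)) *
   (\<Sum>x\<in>UNIV. \<Sum>y\<in>UNIV. \<Sum>z\<in>UNIV. psi n (x^d + y^d + z^d + (x+y+(z::'a))^d))"
proof -
  let ?q = "real (card (UNIV::'a set))"
  have "(\<Sum>a\<in>UNIV. (walsh n d (a::'a))^4) = (\<Sum>a\<in>UNIV. \<Sum>x\<in>UNIV. \<Sum>y\<in>UNIV. \<Sum>z\<in>UNIV. \<Sum>w\<in>UNIV.
     psi n (x^d) * psi n (y^d) * psi n (z^d) * psi n (w^d) * psi n (a*(x+y+z+(w::'a))))"
    by (simp add: W4)
  also have "\<dots> = (\<Sum>x\<in>UNIV. \<Sum>y\<in>UNIV. \<Sum>z\<in>UNIV. \<Sum>w\<in>UNIV. \<Sum>a\<in>UNIV.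
     psi n (x^d) * psi n (y^d) * psi n (z^d) * psi n (w^d) * psi n (a*(x+y+z+(w::'a))))"
    by (rule swap5)
  also have "\<dots> = (\<Sum>x\<in>UNIV. \<Sum>y\<in>UNIV. \<Sum>z\<in>UNIV. \<Sum>w\<in>UNIV.
     psi n (x^d) * psi n (y^d) * psi n (z^d) * psi n (w^d) * (if w = x+y+(z::'a) then ?q else 0))"
  proof (intro sum.cong refl)
    fix x y z w :: 'a
    have e: "(x+y+z+w = 0) = (w = x+y+z)" by (metis add_left_cancel uu)
    show "(\<Sum>a\<in>UNIV. psi n (x^d) * psi n (y^d) * psi n (z^d) * psi n (w^d) * psi n (a*(x+y+z+(w::'a)))) =
       psi n (x^d) * psi n (y^d) * psi n (z^d) * psi n (w^d) * (if w = x+y+z then ?q else 0)"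
      by (simp add: sum_distrib_left[symmetric] Ksum[OF ch cd bb] e)
  qed
  also have "\<dots> = (\<Sum>x\<in>UNIV. \<Sum>y\<in>UNIV. \<Sum>z\<in>UNIV.
     psi n (x^d) * psi n (y^d) * psi n (z^d) * psi n ((x+y+(z::'a))^d) * ?q)"
    by (simp add: if_distrib cong: if_cong)
  also have "\<dots> = ?q * (\<Sum>x\<in>UNIV. \<Sum>y\<in>UNIV. \<Sum>z\<in>UNIV. psi n (x^d + y^d + z^d + (x+y+(z::'a))^d))"
    by (simp add: sum_distrib_left psi_add[OF ch cd] mult_ac)
  finally show ?thesis .
qed


lemma Sbound: "(\<Sum>x\<in>UNIV. \<Sum>y\<in>UNIV. \<Sum>z\<in>UNIV. psi n (x^d + y^d + z^d + (x+y+(z::'a))^d))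
   \<ge> 2 * (real (card (UNIV::'a set)))^2"
proof -
  let ?q = "real (card (UNIV::'a set))"
  define G where "G = (\<lambda>x y z::'a. x^d + y^d + z^d + (x+y+z)^d)"
  define S where "S = (\<Sum>x\<in>UNIV. \<Sum>y\<in>UNIV. \<Sum>z\<in>UNIV. psi n (G x y z))"
  have d0: "d > 0" using inv unfolding invertible_exponent_def by auto
  have hl: "S = (\<Sum>x\<in>UNIV. \<Sum>y\<in>UNIV. \<Sum>z\<in>UNIV. psi n (l^d * G x y z))" if l0: "l \<noteq> 0" for l :: 'a
  proof -
    have e: "G (l*x) (l*y) (l*z) = l^d * G x y z" for x y z
    proof -
      have "l*x+l*y+l*z = l*(x+y+z)" by (simp add: algebra_simps)
      then show ?thesis unfolding G_def by (simp only: power_mult_distrib) (simp add: algebra_simps)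
    qed
    have "S = (\<Sum>x\<in>UNIV. \<Sum>y\<in>UNIV. \<Sum>z\<in>UNIV. psi n (G (l*x) (l*y) (l*z)))"
      unfolding S_def using sum3_mult_reindex[OF l0, of "\<lambda>x y z. psi n (G x y z)"] by simp
    then show ?thesis by (simp add: e)
  qed
  have inner: "(\<Sum>l\<in>UNIV - {0}. psi n (l^d * c)) = (if c = 0 then ?q else 0) - 1" for c :: 'a
  proof -
    have "(\<Sum>l\<in>UNIV - {0}. psi n (l^d * c)) = (\<Sum>l\<in>UNIV. psi n (l^d * c)) - psi n ((0::'a)^d * c)"
      by (simp add: sum_diff1)
    also have "(\<Sum>l\<in>UNIV. psi n (l^d * c)) = (\<Sum>l\<in>UNIV. psi n (l * c))"
      by (rule sum_pow_reindex[OF inv, of "\<lambda>t. psi n (t * c)"])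
    also have "psi n ((0::'a)^d * c) = 1" using d0 psi_0[OF ch cd] by (simp add: power_0_left)
    finally show ?thesis using Ksum[OF ch cd bb] by simp
  qed
  have c1: "card (UNIV::'a set) \<ge> 1" using finite_UNIV_card_ge_0[where 'a='a] by simp
  have "(?q - 1) * S = (\<Sum>l\<in>UNIV - {0::'a}. S)"
    using c1 by (simp add: card_Diff_singleton of_nat_diff)
  also have "\<dots> = (\<Sum>l\<in>UNIV - {0::'a}. \<Sum>x\<in>UNIV. \<Sum>y\<in>UNIV. \<Sum>z\<in>UNIV. psi n (l^d * G x y z))"
    using hl by (intro sum.cong refl) auto
  also have "\<dots> = (\<Sum>x\<in>UNIV. \<Sum>y\<in>UNIV. \<Sum>z\<in>UNIV. \<Sum>l\<in>UNIV - {0::'a}. psi n (l^d * G x y z))"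
    by (rule swap4)
  also have "\<dots> = (\<Sum>x\<in>UNIV. \<Sum>y\<in>UNIV. \<Sum>z\<in>UNIV. (if G x y z = 0 then ?q else 0) - 1)"
    by (simp add: inner)
  also have "\<dots> \<ge> (\<Sum>x\<in>UNIV. \<Sum>y\<in>UNIV. \<Sum>z\<in>(UNIV::'a set). (if x=y \<or> y=z \<or> x=z then ?q else 0) - 1)"
  proof (intro sum_mono)
    fix x y z :: 'a
    have uu2: "u + (u + w) = w" for u w :: 'a by (simp add: add.assoc[symmetric] uu)
    have "x=y \<Longrightarrow> G x y z = 0" unfolding G_def by (simp add: add.assoc uu uu2)
    moreover have "y=z \<Longrightarrow> G x y z = 0" unfolding G_def by (simp add: add.assoc uu uu2)
    moreover have "x=z \<Longrightarrow> G x y z = 0"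
    proof -
      assume "x = z"
      then have "G x y z = (z^d + z^d) + (y^d + (z + (z + y))^d)" unfolding G_def by (simp add: algebra_simps)
      then show ?thesis by (simp add: uu uu2)
    qed
    ultimately have "x=y \<or> y=z \<or> x=z \<Longrightarrow> G x y z = 0" by blast
    then show "(if x=y \<or> y=z \<or> x=z then ?q else 0) - 1 \<le> (if G x y z = 0 then ?q else 0) - 1"
      by auto
  qed
  also have "(\<Sum>x\<in>UNIV. \<Sum>y\<in>UNIV. \<Sum>z\<in>(UNIV::'a set). (if x=y \<or> y=z \<or> x=z then ?q else 0) - 1) = 2*?q^2*(?q-1)"
    by (rule count3) simp
  finally have "2*?q^2*(?q-1) \<le> (?q - 1) * S" .
  moreover have "?q > 1"
  proof -
    have "card {0::'a,1} \<le> card (UNIV::'a set)" by (rule card_mono) auto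
    then show ?thesis by simp
  qed
  ultimately have "2*?q^2 \<le> S" by (simp add: mult.commute)
  then show ?thesis unfolding S_def G_def .
qed


lemma main_b: "\<exists>a::'a. a \<noteq> 0 \<and> \<bar>walsh n d a\<bar> \<ge> sqrt (2 * real (card (UNIV :: 'a set)))"
proof (rule ccontr)
  let ?q = "real (card (UNIV::'a set))"
  let ?W = "\<lambda>a::'a. walsh n d a"
  assume "\<not> ?thesis"
  then have lt: "a \<noteq> 0 \<Longrightarrow> \<bar>?W a\<bar> < sqrt (2 * ?q)" for a by force
  have sq: "a \<noteq> 0 \<Longrightarrow> (?W a)^2 < 2 * ?q" for a
  proof -
    assume a: "a \<noteq> 0"
    have "\<bar>?W a\<bar>^2 < (sqrt (2 * ?q))^2"
      using lt[OF a] by (intro power_strict_mono) auto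
    then show ?thesis by simp
  qed
  have le: "(?W a)^4 \<le> 2 * ?q * (?W a)^2" for a
  proof (cases "a = 0")
    case True then show ?thesis by (simp add: W0)
  next
    case False
    have "(?W a)^4 = (?W a)^2 * (?W a)^2" by algebra
    also have "\<dots> \<le> 2 * ?q * (?W a)^2" using sq[OF False] by (intro mult_right_mono) auto
    finally show ?thesis .
  qed
  have qpos: "?q > 0" by (simp add: finite_UNIV_card_ge_0)
  have "\<exists>a0. ?W a0 \<noteq> 0"
  proof (rule ccontr)
    assume "\<not> (\<exists>a0. ?W a0 \<noteq> 0)"
    then have "\<forall>a. ?W a = 0" by blast
    then have "(\<Sum>a\<in>UNIV. (?W a)^2) = 0" by simp
    then show False using M2 qpos by simp
  qed
  then obtain a0 where a0: "?W a0 \<noteq> 0" by blast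
  then have a00: "a0 \<noteq> 0" using W0 by auto
  have strict: "(?W a0)^4 < 2 * ?q * (?W a0)^2"
  proof -
    have "(?W a0)^4 = (?W a0)^2 * (?W a0)^2" by algebra
    also have "\<dots> < 2 * ?q * (?W a0)^2" using sq[OF a00] a0 by (intro mult_strict_right_mono) auto
    finally show ?thesis .
  qed
  have "(\<Sum>a\<in>UNIV. (?W a)^4) < (\<Sum>a\<in>UNIV. 2 * ?q * (?W a)^2)"
    by (rule sum_strict_mono_ex1) (use le strict in auto)
  also have "\<dots> = 2 * ?q * ?q^2" by (simp add: sum_distrib_left[symmetric] M2)
  finally have A: "(\<Sum>a\<in>UNIV. (?W a)^4) < 2 * ?q * ?q^2" .
  have "(\<Sum>a\<in>UNIV. (?W a)^4) \<ge> ?q * (2 * ?q^2)"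
    unfolding M4 using Sbound qpos by (intro mult_left_mono) auto
  with A show False by (simp add: algebra_simps)
qed

end


theorem mainTheorem7:
  fixes n d :: nat
  assumes "CHAR('a::{finite,field}) = 2"
    and "card (UNIV :: 'a set) = 2 ^ n"
    and "odd n"
    and "invertible_exponent TYPE('a) d"
  shows "\<exists>a::'a. a \<noteq> 0 \<and> \<bar>walsh n d a\<bar> \<ge> sqrt (2 * real (card (UNIV :: 'a set)))"
proof (cases "\<exists>b::'a. psi n b = -1")
  case True
  then obtain b :: 'a where "psi n b = -1" by blast
  then show ?thesis using main_b[OF assms(1,2) _ assms(4)] by blast
next
  case False
  let ?q = "real (card (UNIV::'a set))"
  have p1: "psi n (t::'a) = 1" for t using False unfolding psi_def by (metis (full_types))
  have "walsh n d (1::'a) = (\<Sum>x\<in>(UNIV::'a set). 1)"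
    unfolding walsh_psi[OF assms(1,2)] by (simp add: p1)
  then have w: "walsh n d (1::'a) = ?q" by simp
  have "card {0::'a,1} \<le> card (UNIV::'a set)" by (rule card_mono) auto
  then have q2: "?q \<ge> 2" by simp
  have "sqrt (2 * ?q) \<le> sqrt (?q^2)"
    using q2 by (intro real_sqrt_le_mono) (simp add: power2_eq_square)
  also have "\<dots> = ?q" by simp
  finally show ?thesis using w by (intro exI[of _ 1]) simp
qed

end
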